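(* Let $<_{st}$ and $<_{wk}$ be two strict partial orders on the same set $D$ such that $<_{st}$ extends $<_{wk}$. Then the following two conditions are equivalent: $( * )$ for every $k$ there exists a $<_{st}$-chain with $k$ elements which is a $<_{wk}$-antichain; $(\dagger)$ for every $k$ there exists a finite $<_{st}$-chain $X$ which is not the union of $k$ $<_{wk}$-chains. *)

theory Defs
  imports Main
begin

definition strict_po_on :: "'a set \<Rightarrow> ('a \<Rightarrow> 'a \<Rightarrow> bool) \<Rightarrow> bool" where
  "strict_po_on D r \<longleftrightarrow>
     (\<forall>x\<in>D. \<not> r x x) \<and>
     (\<forall>x\<in>D. \<forall>y\<in>D. \<forall>z\<in>D. r x y \<longrightarrow> r y z \<longrightarrow> r x z)"

definition is_chain_on :: "('a \<Rightarrow> 'a \<Rightarrow> bool) \<Rightarrow> 'a set \<Rightarrow> bool" where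
  "is_chain_on r X \<longleftrightarrow> (\<forall>x\<in>X. \<forall>y\<in>X. x \<noteq> y \<longrightarrow> r x y \<or> r y x)"

definition is_antichain_on :: "('a \<Rightarrow> 'a \<Rightarrow> bool) \<Rightarrow> 'a set \<Rightarrow> bool" where
  "is_antichain_on r X \<longleftrightarrow> (\<forall>x\<in>X. \<forall>y\<in>X. \<not> r x y)"

text \<open>X is the union of k chains (chains may be empty).\<close>
definition union_of_k_chains :: "('a \<Rightarrow> 'a \<Rightarrow> bool) \<Rightarrow> nat \<Rightarrow> 'a set \<Rightarrow> bool" where
  "union_of_k_chains r k X \<longleftrightarrow>
     (\<exists>C :: nat \<Rightarrow> 'a set. (\<forall>i<k. is_chain_on r (C i)) \<and> X = (\<Union>i<k. C i))"

end

theory Submission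
  imports Defs
begin

lemma pad_chains:
  assumes "union_of_k_chains r k X" "k \<le> m"
  shows "union_of_k_chains r m X"
proof -
  obtain C where C: "\<forall>i<k. is_chain_on r (C i)" "X = (\<Union>i<k. C i)"
    using assms(1) unfolding union_of_k_chains_def by blast
  define C' where "C' i = (if i < k then C i else {})" for i
  have "\<forall>i<m. is_chain_on r (C' i)" using C(1) unfolding C'_def is_chain_on_def by auto
  moreover have "X = (\<Union>i<m. C' i)"
  proof
    show "X \<subseteq> (\<Union>i<m. C' i)"
    proof
      fix x assume "x \<in> X"
      then obtain i where "i < k" "x \<in> C i" using C(2) by auto
      then show "x \<in> (\<Union>i<m. C' i)" using assms(2) unfolding C'_def by (intro UN_I[of i]) auto
    qed
  qed (use C(2) in \<open>auto simp: C'_def split: if_splits\<close>)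
  ultimately show ?thesis unfolding union_of_k_chains_def by blast
qed

lemma snoc_chain:
  assumes "union_of_k_chains r k Y" "is_chain_on r K"
  shows "union_of_k_chains r (Suc k) (Y \<union> K)"
proof -
  obtain C where C: "\<forall>i<k. is_chain_on r (C i)" "Y = (\<Union>i<k. C i)"
    using assms(1) unfolding union_of_k_chains_def by blast
  define E where "E = C(k := K)"
  have "\<forall>i<Suc k. is_chain_on r (E i)" using C(1) assms(2) unfolding E_def by (auto simp: less_Suc_eq)
  moreover have "(\<Union>i<Suc k. E i) = Y \<union> K"
    unfolding E_def C(2) lessThan_Suc by auto
  ultimately show ?thesis unfolding union_of_k_chains_def by metis
qed

lemma chain_subset: "is_chain_on r X \<Longrightarrow> Y \<subseteq> X \<Longrightarrow> is_chain_on r Y"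
  unfolding is_chain_on_def by blast

lemma antichain_subset: "is_antichain_on r X \<Longrightarrow> Y \<subseteq> X \<Longrightarrow> is_antichain_on r Y"
  unfolding is_antichain_on_def by blast

lemma disjoint_chains:
  assumes "union_of_k_chains r k X"
  shows "\<exists>C. (\<forall>i<k. is_chain_on r (C i)) \<and> X = (\<Union>i<k. C i) \<and>
             (\<forall>i<k. \<forall>j<k. i \<noteq> j \<longrightarrow> C i \<inter> C j = {})"
proof -
  obtain C where C: "\<forall>i<k. is_chain_on r (C i)" "X = (\<Union>i<k. C i)"
    using assms(1) unfolding union_of_k_chains_def by blast
  define C' where "C' i = {x \<in> C i. \<forall>j<i. x \<notin> C j}" for i
  have 1: "\<forall>i<k. is_chain_on r (C' i)"
  proof (intro allI impI)
    fix i assume "i < k"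
    then have "is_chain_on r (C i)" using C(1) by blast
    moreover have "C' i \<subseteq> C i" unfolding C'_def by blast
    ultimately show "is_chain_on r (C' i)" by (rule chain_subset)
  qed
  have 2: "X = (\<Union>i<k. C' i)"
  proof
    show "(\<Union>i<k. C' i) \<subseteq> X" using C(2) unfolding C'_def by auto
  next
    show "X \<subseteq> (\<Union>i<k. C' i)"
    proof
      fix x assume "x \<in> X"
      then obtain i where i: "i < k" "x \<in> C i" using C(2) by auto
      define n where "n = (LEAST n. x \<in> C n)"
      have "x \<in> C n" unfolding n_def using i(2) by (rule LeastI)
      moreover have "n \<le> i" unfolding n_def using i(2) by (rule Least_le)
      moreover have "\<forall>j<n. x \<notin> C j" unfolding n_def by (auto dest: not_less_Least)
      ultimately have "x \<in> C' n" "n < k" using i(1) unfolding C'_def by auto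
      then show "x \<in> (\<Union>i<k. C' i)" by blast
    qed
  qed
  have 3: "\<forall>i<k. \<forall>j<k. i \<noteq> j \<longrightarrow> C' i \<inter> C' j = {}"
  proof (intro allI impI)
    fix i j assume "i < k" "j < k" "i \<noteq> j"
    then have "i < j \<or> j < i" by arith
    then show "C' i \<inter> C' j = {}" unfolding C'_def by blast
  qed
  show ?thesis using 1 2 3 by blast
qed

lemma maximal_exists:
  assumes "strict_po_on D r" "finite S" "S \<noteq> {}" "S \<subseteq> D"
  shows "\<exists>x\<in>S. \<forall>y\<in>S. \<not> r x y"
  using assms(2,3,4)
proof (induction S rule: finite_ne_induct)
  case (singleton x)
  then show ?case using assms(1) unfolding strict_po_on_def by auto
next
  case (insert b F)
  then obtain m where m: "m \<in> F" "\<forall>y\<in>F. \<not> r m y" by auto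
  show ?case
  proof (cases "r m b")
    case True
    have "\<forall>y\<in>insert b F. \<not> r b y"
    proof
      fix y assume y: "y \<in> insert b F"
      show "\<not> r b y"
      proof
        assume "r b y"
        then have "r m y" using True assms(1) insert.prems m(1) y unfolding strict_po_on_def by blast
        then show False using m y True \<open>r b y\<close> assms(1) insert.prems unfolding strict_po_on_def by blast
      qed
    qed
    then show ?thesis by blast
  next
    case False
    then show ?thesis using m by blast
  qed
qed

lemma antichain_chains_card:
  assumes "is_antichain_on r A" "A \<subseteq> (\<Union>i<k. C i)" "\<forall>i<k. is_chain_on r (C i)"
  shows "card A \<le> k" and "card A = k \<Longrightarrow> \<forall>i<k. A \<inter> C i \<noteq> {}"
proof -
  have le1: "card (A \<inter> C i) \<le> 1" if "i < k" for i
  proof -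
    have "\<forall>x\<in>A \<inter> C i. \<forall>y\<in>A \<inter> C i. x = y"
      using assms(1) assms(3) that unfolding is_antichain_on_def is_chain_on_def by blast
    then show ?thesis by (metis card_le_Suc0_iff_eq finite_subset One_nat_def
          card.infinite le_zero_eq zero_le)
  qed
  have eq: "A = (\<Union>i<k. A \<inter> C i)" using assms(2) by blast
  have cs: "card A \<le> (\<Sum>i<k. card (A \<inter> C i))"
    by (subst eq) (rule card_UN_le, simp)
  also have "\<dots> \<le> (\<Sum>i<k. 1)" by (rule sum_mono) (use le1 in auto)
  finally show "card A \<le> k" by simp
  show "\<forall>i<k. A \<inter> C i \<noteq> {}" if ck: "card A = k"
  proof (intro allI impI notI)
    fix j assume j: "j < k" "A \<inter> C j = {}"
    have "(\<Sum>i<k. card (A \<inter> C i)) = card (A \<inter> C j) + (\<Sum>i\<in>{..<k}-{j}. card (A \<inter> C i))"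
      using j(1) by (simp add: sum.remove)
    also have "\<dots> \<le> 0 + (\<Sum>i\<in>{..<k}-{j}. 1)"
      using j(2) le1 by (intro add_mono sum_mono) auto
    also have "\<dots> = k - 1" using j(1) by simp
    finally show False using cs ck j(1) by linarith
  qed
qed

definition width :: "('a \<Rightarrow> 'a \<Rightarrow> bool) \<Rightarrow> 'a set \<Rightarrow> nat" where
  "width r X = Max {card A | A. A \<subseteq> X \<and> is_antichain_on r A}"

lemma width_props:
  assumes "finite X"
  shows "\<And>A. A \<subseteq> X \<Longrightarrow> is_antichain_on r A \<Longrightarrow> card A \<le> width r X"
    and "\<exists>A. A \<subseteq> X \<and> is_antichain_on r A \<and> card A = width r X"
proof -
  have fin: "finite {card A | A. A \<subseteq> X \<and> is_antichain_on r A}"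
    by (rule finite_subset[of _ "{..card X}"]) (auto intro: card_mono[OF assms])
  have ne: "{card A | A. A \<subseteq> X \<and> is_antichain_on r A} \<noteq> {}"
    unfolding is_antichain_on_def by blast
  show "\<And>A. A \<subseteq> X \<Longrightarrow> is_antichain_on r A \<Longrightarrow> card A \<le> width r X"
    unfolding width_def using fin by (intro Max_ge) auto
  show "\<exists>A. A \<subseteq> X \<and> is_antichain_on r A \<and> card A = width r X"
    using Max_in[OF fin ne] unfolding width_def by auto
qed


lemma dilworth:
  assumes po: "strict_po_on D r"
  shows "finite X \<Longrightarrow> X \<subseteq> D \<Longrightarrow> union_of_k_chains r (width r X) X"
proof (induction "card X" arbitrary: X rule: less_induct)
  case less
  note IH = less.hyps
  have irr: "\<And>x. x \<in> D \<Longrightarrow> \<not> r x x" using po unfolding strict_po_on_def by blast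
  have trans: "\<And>x y z. x \<in> D \<Longrightarrow> y \<in> D \<Longrightarrow> z \<in> D \<Longrightarrow> r x y \<Longrightarrow> r y z \<Longrightarrow> r x z"
    using po unfolding strict_po_on_def by blast
  show ?case
  proof (cases "X = {}")
    case True
    then show ?thesis unfolding union_of_k_chains_def is_chain_on_def by (intro exI[of _ "\<lambda>_. {}"]) auto
  next
    case False
    obtain a where a: "a \<in> X" "\<forall>y\<in>X. \<not> r a y"
      using maximal_exists[OF po less.prems(1) False less.prems(2)] by blast
    define X' where "X' = X - {a}"
    have finX': "finite X'" "X' \<subseteq> D" using less.prems unfolding X'_def by auto
    have cX': "card X' < card X" unfolding X'_def using a(1) less.prems(1) by (intro card_Diff1_less)
    define w' where "w' = width r X'"
    obtain C where C: "\<forall>i<w'. is_chain_on r (C i)" "X' = (\<Union>i<w'. C i)"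
      "\<forall>i<w'. \<forall>j<w'. i \<noteq> j \<longrightarrow> C i \<inter> C j = {}"
      using disjoint_chains[OF IH[OF cX' finX']] unfolding w'_def by blast
    have CX': "\<And>i. i < w' \<Longrightarrow> C i \<subseteq> X'" using C(2) by blast
    have ac_mono: "\<And>A. A \<subseteq> X' \<Longrightarrow> is_antichain_on r A \<Longrightarrow> card A \<le> width r X"
      using width_props(1)[OF less.prems(1)] unfolding X'_def by blast
    have wX: "w' \<le> width r X"
      using width_props(2)[OF finX'(1)] ac_mono unfolding w'_def by metis
    show ?thesis
    proof (cases "w' = 0")
      case True
      have "X' = {}"
      proof (rule ccontr)
        assume "X' \<noteq> {}"
        then obtain x where "x \<in> X'" by blast
        then have "is_antichain_on r {x}" using irr finX'(2) unfolding is_antichain_on_def by auto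
        then have "card {x} \<le> w'" using width_props(1)[OF finX'(1)] \<open>x \<in> X'\<close> unfolding w'_def by blast
        then show False using True by simp
      qed
      then have Xa: "X = {a}" using a(1) unfolding X'_def by blast
      have "is_antichain_on r {a}" using irr a(1) less.prems(2) unfolding is_antichain_on_def by auto
      then have "card {a} \<le> width r X" using width_props(1)[OF less.prems(1)] Xa by blast
      then have w1: "1 \<le> width r X" by simp
      have "union_of_k_chains r 0 {}" unfolding union_of_k_chains_def by auto
      then have "union_of_k_chains r (Suc 0) ({} \<union> {a})"
        by (rule snoc_chain) (simp add: is_chain_on_def)
      then have "union_of_k_chains r (Suc 0) X" using Xa by simp
      then show ?thesis using pad_chains[of r "Suc 0" X "width r X"] w1 by simp
    next
      case False
      define M where "M = {B. B \<subseteq> X' \<and> is_antichain_on r B \<and> card B = w'}"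
      have Mne: "M \<noteq> {}" using width_props(2)[OF finX'(1)] unfolding M_def w'_def by blast
      have meet: "\<And>B i. B \<in> M \<Longrightarrow> i < w' \<Longrightarrow> B \<inter> C i \<noteq> {}"
      proof -
        fix B i assume "B \<in> M" "i < w'"
        then have "is_antichain_on r B" "B \<subseteq> (\<Union>i<w'. C i)" "card B = w'"
          using C(2) unfolding M_def by auto
        then show "B \<inter> C i \<noteq> {}" using antichain_chains_card(2)[OF _ _ C(1)] \<open>i < w'\<close> by blast
      qed
      define S where "S i = C i \<inter> \<Union>M" for i
      have Sne: "\<And>i. i < w' \<Longrightarrow> S i \<noteq> {}" using meet Mne unfolding S_def by blast
      have Sfin: "\<And>i. i < w' \<Longrightarrow> finite (S i)" using CX' finX'(1) unfolding S_def
        by (meson finite_Int finite_subset)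
      have SD: "\<And>i. i < w' \<Longrightarrow> S i \<subseteq> D" using CX' finX'(2) unfolding S_def by blast
      define x where "x i = (SOME y. y \<in> S i \<and> (\<forall>z\<in>S i. \<not> r y z))" for i
      have x: "\<And>i. i < w' \<Longrightarrow> x i \<in> S i \<and> (\<forall>z\<in>S i. \<not> r (x i) z)"
      proof -
        fix i assume "i < w'"
        then have "\<exists>y. y \<in> S i \<and> (\<forall>z\<in>S i. \<not> r y z)"
          using maximal_exists[OF po Sfin Sne SD] by blast
        then show "x i \<in> S i \<and> (\<forall>z\<in>S i. \<not> r (x i) z)" unfolding x_def by (rule someI_ex)
      qed
      have xC: "\<And>i. i < w' \<Longrightarrow> x i \<in> C i" using x unfolding S_def by blast
      have xX': "\<And>i. i < w' \<Longrightarrow> x i \<in> X'" using xC CX' by blast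
      have below: "\<And>B i y. B \<in> M \<Longrightarrow> i < w' \<Longrightarrow> y \<in> B \<Longrightarrow> y \<in> C i \<Longrightarrow> y = x i \<or> r y (x i)"
      proof -
        fix B i y assume h: "B \<in> M" "i < w'" "y \<in> B" "y \<in> C i"
        then have "y \<in> S i" unfolding S_def by blast
        then have "\<not> r (x i) y" using x h(2) by blast
        moreover have "y \<noteq> x i \<Longrightarrow> r y (x i) \<or> r (x i) y"
          using C(1) h(2,4) xC[OF h(2)] unfolding is_chain_on_def by blast
        ultimately show "y = x i \<or> r y (x i)" by blast
      qed
      show ?thesis
      proof (cases "\<exists>i<w'. r (x i) a")
        case True
        then obtain i where i: "i < w'" "r (x i) a" by blast
        define K where "K = insert a {z \<in> C i. z = x i \<or> r z (x i)}"
        define Y where "Y = X - K"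
        have KX: "K \<subseteq> X" using CX'[OF i(1)] a(1) unfolding K_def X'_def by blast
        have Kchain: "is_chain_on r K"
        proof -
          have "\<And>z. z \<in> C i \<Longrightarrow> z = x i \<or> r z (x i) \<Longrightarrow> r z a"
          proof -
            fix z assume "z \<in> C i" "z = x i \<or> r z (x i)"
            moreover have "z \<in> D" "x i \<in> D" "a \<in> D"
              using \<open>z \<in> C i\<close> CX'[OF i(1)] xX'[OF i(1)] finX'(2) a(1) less.prems(2) by blast+
            ultimately show "r z a" using trans i(2) by blast
          qed
          then show ?thesis using C(1) i(1) unfolding K_def is_chain_on_def by blast
        qed
        have finY: "finite Y" "Y \<subseteq> D" using less.prems unfolding Y_def by auto
        have cY: "card Y < card X" proof -
          have "Y \<subset> X" using a(1) KX unfolding Y_def K_def by blast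
          then show ?thesis by (rule psubset_card_mono[OF less.prems(1)])
        qed
        have wY: "width r Y < w'"
        proof (rule ccontr)
          assume "\<not> width r Y < w'"
          obtain B where B: "B \<subseteq> Y" "is_antichain_on r B" "card B = width r Y"
            using width_props(2)[OF finY(1)] by blast
          have BX': "B \<subseteq> X'" using B(1) a(1) unfolding Y_def X'_def K_def by blast
          have "card B \<le> w'" using width_props(1)[OF finX'(1) BX' B(2)] unfolding w'_def .
          then have "B \<in> M" using B \<open>\<not> width r Y < w'\<close> BX' unfolding M_def by auto
          then obtain y where y: "y \<in> B" "y \<in> C i" using meet i(1) by blast
          then have "y \<in> K" using below[OF \<open>B \<in> M\<close> i(1)] unfolding K_def by blast
          then show False using y(1) B(1) unfolding Y_def by blast
        qed
        have "union_of_k_chains r (w' - 1) Y"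
          using pad_chains[OF IH[OF cY finY]] wY by simp
        then have "union_of_k_chains r (Suc (w' - 1)) (Y \<union> K)" using Kchain by (rule snoc_chain)
        moreover have "Y \<union> K = X" using KX unfolding Y_def by blast
        moreover have "Suc (w' - 1) = w'" using False by simp
        ultimately have "union_of_k_chains r w' X" by simp
        then show ?thesis using wX by (rule pad_chains)
      next
        case False2: False
        define A where "A = x ` {..<w'}"
        have xinj: "inj_on x {..<w'}"
        proof (rule inj_onI)
          fix i j assume "i \<in> {..<w'}" "j \<in> {..<w'}" "x i = x j"
          then show "i = j" using xC[of i] xC[of j] C(3) by auto
        qed
        have cA: "card A = w'" unfolding A_def using card_image[OF xinj] by simp
        have Aac: "\<And>i j. i < w' \<Longrightarrow> j < w' \<Longrightarrow> \<not> r (x i) (x j)"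
        proof
          fix i j assume ij: "i < w'" "j < w'" "r (x i) (x j)"
          have xD: "x i \<in> D" "x j \<in> D" using xX' ij finX'(2) by blast+
          show False
          proof (cases "i = j")
            case True then show False using irr xD ij(3) by simp
          next
            case False
            obtain B' where B': "B' \<in> M" "x j \<in> B'" using x[OF ij(2)] unfolding S_def by blast
            obtain z where z: "z \<in> B'" "z \<in> C i" using meet[OF B'(1) ij(1)] by blast
            have zD: "z \<in> D" using z(1) B'(1) finX'(2) unfolding M_def by blast
            have acB': "is_antichain_on r B'" using B'(1) unfolding M_def by blast
            from below[OF B'(1) ij(1) z] show False
            proof
              assume "z = x i" then show False using acB' B'(2) z(1) ij(3) unfolding is_antichain_on_def by blast
            next
              assume "r z (x i)"
              then have "r z (x j)" using trans zD xD ij(3) by blast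
              then show False using acB' B'(2) z(1) unfolding is_antichain_on_def by blast
            qed
          qed
        qed
        have aA: "a \<notin> A" using xX' unfolding A_def X'_def by blast
        have "is_antichain_on r (insert a A)"
          unfolding is_antichain_on_def A_def
        proof (intro ballI)
          fix u v assume u: "u \<in> insert a (x ` {..<w'})" and v: "v \<in> insert a (x ` {..<w'})"
          have aD: "a \<in> D" using a(1) less.prems(2) by blast
          show "\<not> r u v"
          proof (cases "u = a")
            case True
            then show ?thesis using a v xX' by (auto simp: X'_def)
          next
            case False
            then obtain i where i: "i < w'" "u = x i" using u by blast
            show ?thesis
            proof (cases "v = a")
              case True then show ?thesis using False2 i by blast
            next
              case False
              then obtain j where "j < w'" "v = x j" using v by blast
              then show ?thesis using Aac i by blast
            qed
          qed
        qed
        moreover have "insert a A \<subseteq> X" using a(1) xX' unfolding A_def X'_def by blast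
        ultimately have "card (insert a A) \<le> width r X" using width_props(1)[OF less.prems(1)] by blast
        moreover have "card (insert a A) = Suc w'" using aA cA unfolding A_def by simp
        ultimately have w1: "Suc w' \<le> width r X" by simp
        have "union_of_k_chains r w' X'" unfolding union_of_k_chains_def using C(1,2) by blast
        then have "union_of_k_chains r (Suc w') (X' \<union> {a})" by (rule snoc_chain) (simp add: is_chain_on_def)
        moreover have "X' \<union> {a} = X" using a(1) unfolding X'_def by blast
        ultimately have "union_of_k_chains r (Suc w') X" by simp
        then show ?thesis using w1 by (rule pad_chains)
      qed
    qed
  qed
qed

theorem mainTheorem15:
  fixes D :: "'a set" and st wk :: "'a \<Rightarrow> 'a \<Rightarrow> bool"
  assumes "strict_po_on D st" and "strict_po_on D wk"
    and "\<forall>x\<in>D. \<forall>y\<in>D. wk x y \<longrightarrow> st x y"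
  shows "(\<forall>k::nat. \<exists>X\<subseteq>D. finite X \<and> card X = k \<and> is_chain_on st X \<and> is_antichain_on wk X)
     \<longleftrightarrow> (\<forall>k::nat. \<exists>X\<subseteq>D. finite X \<and> is_chain_on st X \<and> \<not> union_of_k_chains wk k X)"
proof
  assume H: "\<forall>k::nat. \<exists>X\<subseteq>D. finite X \<and> card X = k \<and> is_chain_on st X \<and> is_antichain_on wk X"
  show "\<forall>k::nat. \<exists>X\<subseteq>D. finite X \<and> is_chain_on st X \<and> \<not> union_of_k_chains wk k X"
  proof
    fix k :: nat
    obtain X where X: "X \<subseteq> D" "finite X" "card X = Suc k" "is_chain_on st X" "is_antichain_on wk X"
      using H by blast
    have "\<not> union_of_k_chains wk k X"
    proof
      assume "union_of_k_chains wk k X"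
      then obtain C where C: "\<forall>i<k. is_chain_on wk (C i)" "X = (\<Union>i<k. C i)"
        unfolding union_of_k_chains_def by blast
      have "card X \<le> k" using antichain_chains_card(1)[OF X(5) _ C(1)] C(2) by blast
      then show False using X(3) by simp
    qed
    then show "\<exists>X\<subseteq>D. finite X \<and> is_chain_on st X \<and> \<not> union_of_k_chains wk k X"
      using X by blast
  qed
next
  assume H: "\<forall>k::nat. \<exists>X\<subseteq>D. finite X \<and> is_chain_on st X \<and> \<not> union_of_k_chains wk k X"
  show "\<forall>k::nat. \<exists>X\<subseteq>D. finite X \<and> card X = k \<and> is_chain_on st X \<and> is_antichain_on wk X"
  proof
    fix k :: nat
    obtain X where X: "X \<subseteq> D" "finite X" "is_chain_on st X" "\<not> union_of_k_chains wk k X"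
      using H by blast
    have U: "union_of_k_chains wk (width wk X) X" using dilworth[OF assms(2) X(2) X(1)] .
    have "\<not> width wk X \<le> k"
    proof
      assume "width wk X \<le> k"
      then have "union_of_k_chains wk k X" by (rule pad_chains[OF U])
      then show False using X(4) by blast
    qed
    then have kw: "k \<le> width wk X" by simp
    obtain A where A: "A \<subseteq> X" "is_antichain_on wk A" "card A = width wk X"
      using width_props(2)[OF X(2)] by blast
    obtain B where B: "B \<subseteq> A" "card B = k"
      using obtain_subset_with_card_n[of k A] kw A(3) by auto
    have "finite B" using B(1) A(1) X(2) by (meson finite_subset)
    moreover have "is_chain_on st B" using B(1) A(1) by (intro chain_subset[OF X(3)]) auto
    moreover have "is_antichain_on wk B" using antichain_subset[OF A(2) B(1)] .
    ultimately show "\<exists>X\<subseteq>D. finite X \<and> card X = k \<and> is_chain_on st X \<and> is_antichain_on wk X"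
      using B A(1) X(1) by blast
  qed
qed

end
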